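(* Let $p>q>1$ be relatively prime integers. Let $\mathbf{x}$ be a $\frac pq$-automatic sequence over a finite alphabet $B$ generated by a deterministic finite automaton with output $\mathcal{A}=(Q,q_0,A_p,\delta,\tau:Q\to B)$ with the following property: there exists an integer $h\ge0$ such that for all words $u,v\in L_{\frac pq}$ with $\mathrm{val}_{\frac pq}(u)\equiv\mathrm{val}_{\frac pq}(v)\pmod{q^h}$ and $\delta(q_0,u)\ne\delta(q_0,v)$, there exists a word $w\in u^{-1}L_{\frac pq}\cap A_p^{\le h}$ such that $\tau(\delta(q_0,uw))\ne\tau(\delta(q_0,vw))$. Then, in the tree $T(L_{\frac pq})$ decorated by $\mathbf{x}$, each factor in $F_h^\infty$ can be extended to at most one factor in $F^\infty_{h+1,w_{j,0}}$, for every $0\le j\le q-1$.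
   Context: $A_p=\{0,\ldots,p-1\}$; for $w=w_\ell\cdots w_0\in A_p^*$, $\mathrm{val}_{\frac pq}(w)=\sum_{i=0}^{\ell}\frac{w_i}{q}(\frac pq)^i$; $\mathrm{rep}_{\frac pq}(n)$ is the unique word not starting with $0$ of value $n$ ($\mathrm{rep}_{\frac pq}(0)=\varepsilon$); $L_{\frac pq}=\{\mathrm{rep}_{\frac pq}(n):n\ge0\}$; $w^{-1}L=\{u:wu\in L\}$. $\mathbf{x}$ is generated by $\mathcal{A}$ if $x_n=\tau(\delta(q_0,\mathrm{rep}_{\frac pq}(n)))$ for all $n$. $T(L_{\frac pq})$ is the tree whose nodes are the words of $L_{\frac pq}$, with an edge labeled $d$ from $w$ to $wd$ whenever both are in $L_{\frac pq}$; node $w$ is decorated by $x_{\mathrm{val}_{\frac pq}(w)}$. For $w\in L_{\frac pq}$, the factor $T[w,h]$ of height $h$ has domain $w^{-1}L_{\frac pq}\cap A_p^{\le h}$, with node $u$ decorated by $x_{\mathrm{val}_{\frac pq}(wu)}$; two factors of the same height are equal if they have the same domain and the same decorations. $F_h$ is the set of factors of height $h$; $F_h^\infty\subseteq F_h$ is the set of those equal to $T[w,h]$ for infinitely many $w\in L_{\frac pq}$. For a letter $a$, $F^\infty_{h,a}$ is the set of factors in $F^\infty_h$ whose radix-least word of length $h$ in the domain ends with $a$. A factor $U$ of height $h$ is extended to a factor $U'$ of height $h+1$ if the truncation of $U'$ to words of length at most $h$ (same decorations) equals $U$. For $0\le j\le q-1$, $w_j$ is the word listing in increasing order the letters $a\in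 A_p$ with $a\equiv -pj\pmod q$ (so that $(w_0,\ldots,w_{q-1})$ is the periodic labeled signature of $T(L_{\frac pq})$), and $w_{j,0}$ is its first letter. *)

theory Defs
  imports Complex_Main "HOL-Number_Theory.Cong"
begin

(* Words over A_p are lists of naturals, written most significant digit first:
   the list [w_l, ..., w_0] represents w = w_l ... w_0. *)

definition alph :: "nat \<Rightarrow> nat set" where
  "alph p = {0..<p}"

definition val :: "nat \<Rightarrow> nat \<Rightarrow> nat list \<Rightarrow> rat" where
  "val p q w = (\<Sum>i<length w. (of_nat (rev w ! i) / of_nat q) * (of_nat p / of_nat q) ^ i)"

definition rep :: "nat \<Rightarrow> nat \<Rightarrow> nat \<Rightarrow> nat list" where
  "rep p q n = (THE w. set w \<subseteq> alph p \<and> (w = [] \<or> hd w \<noteq> 0) \<and> val p q w = of_nat n)"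

definition L :: "nat \<Rightarrow> nat \<Rightarrow> nat list set" where
  "L p q = range (rep p q)"

definition delta_star :: "('s \<Rightarrow> nat \<Rightarrow> 's) \<Rightarrow> 's \<Rightarrow> nat list \<Rightarrow> 's" where
  "delta_star \<delta> s w = foldl \<delta> s w"

definition generated_by ::
  "nat \<Rightarrow> nat \<Rightarrow> (nat \<Rightarrow> 'b) \<Rightarrow> 's set \<Rightarrow> 's \<Rightarrow> ('s \<Rightarrow> nat \<Rightarrow> 's) \<Rightarrow> ('s \<Rightarrow> 'b) \<Rightarrow> bool" where
  "generated_by p q x Q q0 \<delta> \<tau> \<longleftrightarrow>
     finite Q \<and> q0 \<in> Q \<and> (\<forall>s\<in>Q. \<forall>a\<in>alph p. \<delta> s a \<in> Q) \<and>
     (\<forall>n. x n = \<tau> (delta_star \<delta> q0 (rep p q n)))"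

definition nval :: "nat \<Rightarrow> nat \<Rightarrow> nat list \<Rightarrow> nat" where
  "nval p q w = nat \<lfloor>val p q w\<rfloor>"

(* factor T[w,h] of the tree T(L_{p/q}) decorated by x, encoded as a partial map:
   its domain is w^{-1}L \<inter> A_p^{\<le>h}, and node u carries x_{val(wu)} *)
definition factor :: "nat \<Rightarrow> nat \<Rightarrow> (nat \<Rightarrow> 'b) \<Rightarrow> nat list \<Rightarrow> nat \<Rightarrow> nat list \<Rightarrow> 'b option" where
  "factor p q x w h = (\<lambda>u. if w @ u \<in> L p q \<and> set u \<subseteq> alph p \<and> length u \<le> h
                              then Some (x (nval p q (w @ u))) else None)"

definition F :: "nat \<Rightarrow> nat \<Rightarrow> (nat \<Rightarrow> 'b) \<Rightarrow> nat \<Rightarrow> (nat list \<Rightarrow> 'b option) set" where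
  "F p q x h = {factor p q x w h | w. w \<in> L p q}"

definition F_inf :: "nat \<Rightarrow> nat \<Rightarrow> (nat \<Rightarrow> 'b) \<Rightarrow> nat \<Rightarrow> (nat list \<Rightarrow> 'b option) set" where
  "F_inf p q x h = {U \<in> F p q x h. infinite {w \<in> L p q. factor p q x w h = U}}"

definition radix_le :: "nat list \<Rightarrow> nat list \<Rightarrow> bool" where
  "radix_le u v \<longleftrightarrow> length u < length v \<or>
     (length u = length v \<and> (u = v \<or> (u, v) \<in> lexord {(a, b). a < b}))"

definition F_inf_letter :: "nat \<Rightarrow> nat \<Rightarrow> (nat \<Rightarrow> 'b) \<Rightarrow> nat \<Rightarrow> nat \<Rightarrow> (nat list \<Rightarrow> 'b option) set" where
  "F_inf_letter p q x h a = {U \<in> F_inf p q x h.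
      \<exists>u. U u \<noteq> None \<and> length u = h \<and>
          (\<forall>v. U v \<noteq> None \<and> length v = h \<longrightarrow> radix_le u v) \<and>
          u \<noteq> [] \<and> last u = a}"

definition extends :: "nat \<Rightarrow> (nat list \<Rightarrow> 'b option) \<Rightarrow> (nat list \<Rightarrow> 'b option) \<Rightarrow> bool" where
  "extends h U U' \<longleftrightarrow> (\<lambda>u. if length u \<le> h then U' u else None) = U"

(* w_j: letters a of A_p with a = -pj (mod q), in increasing order; w_{j,0} its first letter *)
definition sigword :: "nat \<Rightarrow> nat \<Rightarrow> nat \<Rightarrow> nat list" where
  "sigword p q j = filter (\<lambda>a. [int a = - (int p * int j)] (mod int q)) [0..<p]"

definition sigfirst :: "nat \<Rightarrow> nat \<Rightarrow> nat \<Rightarrow> nat" where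
  "sigfirst p q j = hd (sigword p q j)"

end

theory Submission
  imports Defs
begin


lemma val_Nil[simp]: "val p q [] = 0" by (simp add: val_def)

lemma val_snoc:
  assumes "q > 0"
  shows "val p q (w @ [a]) = (of_nat p * val p q w + of_nat a) / of_nat q"
proof -
  have "val p q (w @ [a]) = (\<Sum>i<Suc (length w). (of_nat ((a # rev w) ! i) / of_nat q) * (of_nat p / of_nat q) ^ i)"
    by (simp add: val_def)
  also have "\<dots> = of_nat a / of_nat q + (\<Sum>i<length w. (of_nat (rev w ! i) / of_nat q) * (of_nat p / of_nat q) ^ Suc i)"
    by (subst sum.lessThan_Suc_shift) simp
  also have "\<dots> = of_nat a / of_nat q + (of_nat p / of_nat q) * val p q w"
    by (simp add: val_def sum_distrib_left mult_ac)
  finally show ?thesis using assms by (simp add: field_simps)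
qed

lemma val_append:
  assumes "q > 0"
  shows "val p q (u @ w) = val p q u * (of_nat p / of_nat q) ^ length w + val p q w"
proof (induction w rule: rev_induct)
  case Nil then show ?case by simp
next
  case (snoc a w)
  have "val p q (u @ w @ [a]) = (of_nat p * val p q (u @ w) + of_nat a) / of_nat q"
    using val_snoc[OF assms, of p "u @ w" a] by simp
  also have "\<dots> = val p q u * (of_nat p / of_nat q) ^ length (w @ [a]) + val p q (w @ [a])"
    using snoc assms by (simp add: val_snoc field_simps)
  finally show ?case by simp
qed

lemma val_nonneg: "q > 0 \<Longrightarrow> val p q w \<ge> 0"
  by (induction w rule: rev_induct) (auto simp: val_snoc)

lemma val_pos:
  assumes "q > 0" "p > 0" "w \<noteq> []" "hd w \<noteq> 0"
  shows "val p q w > 0"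
proof -
  obtain b v where w: "w = [b] @ v" using assms(3) by (cases w) auto
  have b: "b > 0" using assms(4) w by simp
  have "val p q [b] > 0" using val_snoc[OF assms(1), of p "[]" b] b assms by simp
  moreover have "(of_nat p / of_nat q :: rat) ^ length v > 0" using assms by simp
  ultimately show ?thesis unfolding w val_append[OF assms(1)]
    using val_nonneg[OF assms(1), of p v] by (simp add: add_pos_nonneg)
qed

lemma val_denom:
  assumes "q > 0"
  shows "\<exists>i::int. of_nat q ^ length w * val p q w = of_int i"
proof (induction w rule: rev_induct)
  case Nil then show ?case by (auto intro: exI[of _ 0])
next
  case (snoc a w)
  then obtain i where i: "of_nat q ^ length w * val p q w = of_int i" by blast
  have "of_nat q ^ length (w @ [a]) * val p q (w @ [a]) = of_int (int p * i + int q ^ length w * int a)"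
    using assms i[symmetric] by (simp add: val_snoc field_simps)
  then show ?case by blast
qed

lemma rat_int_of:
  fixes r :: rat
  assumes "coprime p q" "of_nat q ^ k * r = of_int X" "of_nat p * r = of_int Y" "p > 0"
  shows "\<exists>i::int. r = of_int i"
proof -
  have "of_int (int p * X) = (of_int (int q ^ k * Y) :: rat)"
    using assms(2,3) by (metis (no_types, lifting) mult.left_commute of_int_mult of_int_of_nat_eq of_int_power)
  then have e: "int p * X = int q ^ k * Y" by (simp only: of_int_eq_iff)
  have "coprime (int p) (int q ^ k)" using assms(1) by simp
  then have "int p dvd Y" using e by (metis coprime_dvd_mult_right_iff dvd_triv_left)
  then obtain c where "Y = int p * c" by blast
  then have "r = of_int c" using assms(3,4) by simp
  then show ?thesis by blast
qed




definition good :: "nat \<Rightarrow> nat list \<Rightarrow> bool" where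
  "good p w \<longleftrightarrow> set w \<subseteq> alph p \<and> (w = [] \<or> hd w \<noteq> 0)"

lemma rep_exists:
  assumes "q > 0" "p > q"
  shows "\<exists>w. good p w \<and> val p q w = of_nat n"
  using assms
proof (induction n rule: less_induct)
  case (less n)
  show ?case
  proof (cases "n = 0")
    case True then show ?thesis by (auto simp: good_def intro: exI[of _ "[]"])
  next
    case False
    define a where "a = (q * n) mod p"
    define n1 where "n1 = (q * n) div p"
    have qn: "q * n = p * n1 + a" unfolding a_def n1_def by simp
    have "q * n < p * n" using False less.prems by simp
    then have "n1 < n" unfolding n1_def using less.prems
      by (metis div_less_iff_less_mult gr_zeroI less_trans mult.commute mult_zero_left not_less_zero)
    then obtain w where w: "good p w" "val p q w = of_nat n1" using less by blast
    have ap: "a < p" unfolding a_def using less.prems by simp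
    have "val p q (w @ [a]) = of_nat n"
    proof -
      have "(of_nat p * of_nat n1 + of_nat a :: rat) = of_nat (q * n)" using qn by simp
      then show ?thesis using w(2) less.prems by (simp add: val_snoc)
    qed
    moreover have "good p (w @ [a])"
    proof -
      have "set (w @ [a]) \<subseteq> alph p" using w(1) ap by (auto simp: good_def alph_def)
      moreover have "hd (w @ [a]) \<noteq> 0"
      proof (cases "w = []")
        case True
        then have "n1 = 0" using w(2) by simp
        then have "a = q * n" using qn by simp
        then show ?thesis using True False less.prems by simp
      next
        case False then show ?thesis using w(1) by (simp add: good_def)
      qed
      ultimately show ?thesis by (simp add: good_def)
    qed
    ultimately show ?thesis by blast
  qed
qed

lemma val_int_prefix:
  assumes "q > 0" "p > 0" "coprime p q" "val p q (w @ [a]) = of_int n"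
  shows "\<exists>i::int. val p q w = of_int i"
proof -
  obtain X where X: "of_nat q ^ length w * val p q w = of_int X" using val_denom[OF assms(1)] by blast
  have "of_nat p * val p q w = of_int (int q * n - int a)"
    using assms(4) assms(1) by (simp add: val_snoc field_simps)
  then show ?thesis using rat_int_of[OF assms(3) X] assms(2) by blast
qed

lemma rep_unique:
  assumes "q > 0" "p > 0" "coprime p q"
  shows "good p w1 \<Longrightarrow> good p w2 \<Longrightarrow> val p q w1 = val p q w2 \<Longrightarrow> val p q w1 = of_int n \<Longrightarrow> w1 = w2"
proof (induction w1 arbitrary: w2 n rule: rev_induct)
  case Nil
  show ?case
  proof (rule ccontr)
    assume "[] \<noteq> w2"
    then have "val p q w2 > 0" using val_pos[OF assms(1,2), of w2] Nil by (auto simp: good_def)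
    then show False using Nil by simp
  qed
next
  case (snoc a w1)
  have "w2 \<noteq> []"
  proof
    assume "w2 = []"
    then have "val p q (w1 @ [a]) > 0" using val_pos[OF assms(1,2)] snoc(2) by (auto simp: good_def)
    then show False using snoc \<open>w2 = []\<close> by simp
  qed
  then obtain w2' b where w2: "w2 = w2' @ [b]" by (metis rev_exhaust)
  obtain i where i: "val p q w1 = of_int i" using val_int_prefix[OF assms snoc(5)] by blast
  obtain i2 where i2: "val p q w2' = of_int i2" using val_int_prefix[OF assms, of w2' b n] snoc(4,5) w2 by auto
  have "of_int (int p * i + int a) = (of_int (int p * i2 + int b) :: rat)"
    using snoc(4) w2 i i2 assms(1) by (simp add: val_snoc)
  then have e: "int p * i + int a = int p * i2 + int b" by (simp only: of_int_eq_iff)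
  have ap: "a < p" "b < p" using snoc(2,3) w2 by (auto simp: good_def alph_def)
  have "int a = (int p * i + int a) mod int p" using ap by simp
  also have "\<dots> = (int p * i2 + int b) mod int p" using e by simp
  also have "\<dots> = int b" using ap by simp
  finally have ab: "a = b" by simp
  then have ii: "i = i2" using e assms(2) by simp
  have g1: "good p w1" using snoc(2) by (cases w1) (auto simp: good_def)
  have g2: "good p w2'" using snoc(3) w2 by (cases w2') (auto simp: good_def)
  have "w1 = w2'" using snoc.IH[OF g1 g2] i i2 ii by simp
  then show ?case using ab w2 by simp
qed

context
  fixes p q :: nat
  assumes q1: "q > 1" and pq: "p > q" and cop: "coprime p q"
begin

lemma q0: "q > 0" using q1 by simp
lemma p0: "p > 0" using pq by simp

lemma rep_prop: "good p (rep p q n) \<and> val p q (rep p q n) = of_nat n"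
proof -
  have "\<exists>!w. good p w \<and> val p q w = of_nat n"
  proof (rule ex_ex1I)
    show "\<exists>w. good p w \<and> val p q w = of_nat n" using rep_exists[OF q0 pq] .
  next
    fix w1 w2 assume "good p w1 \<and> val p q w1 = of_nat n" "good p w2 \<and> val p q w2 = of_nat n"
    then show "w1 = w2" using rep_unique[OF q0 p0 cop, of w1 w2 "int n"] by simp
  qed
  then have "good p (THE w. good p w \<and> val p q w = of_nat n) \<and> val p q (THE w. good p w \<and> val p q w = of_nat n) = of_nat n"
    by (rule theI')
  then show ?thesis unfolding rep_def good_def by simp
qed

lemma L_iff: "w \<in> L p q \<longleftrightarrow> good p w \<and> (\<exists>n::nat. val p q w = of_nat n)"
proof
  assume "w \<in> L p q"
  then show "good p w \<and> (\<exists>n::nat. val p q w = of_nat n)" unfolding L_def using rep_prop by auto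
next
  assume a: "good p w \<and> (\<exists>n::nat. val p q w = of_nat n)"
  then obtain n where n: "val p q w = of_nat n" by blast
  have "w = rep p q n" using rep_unique[OF q0 p0 cop, of w "rep p q n" "int n"] rep_prop[of n] a n by simp
  then show "w \<in> L p q" unfolding L_def by simp
qed

lemma L_int_iff: "w \<in> L p q \<longleftrightarrow> good p w \<and> (\<exists>n::int. val p q w = of_int n)"
proof -
  have "(\<exists>n::nat. val p q w = of_nat n) \<longleftrightarrow> (\<exists>n::int. val p q w = of_int n)"
  proof
    assume "\<exists>n::int. val p q w = of_int n"
    then obtain n where n: "val p q w = of_int n" by blast
    then have "n \<ge> 0" using val_nonneg[OF q0, of p w] by simp
    then have "val p q w = of_nat (nat n)" using n by simp
    then show "\<exists>n::nat. val p q w = of_nat n" by blast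
  qed (metis of_int_of_nat_eq)
  then show ?thesis using L_iff by simp
qed

lemma L_rep: "w \<in> L p q \<Longrightarrow> rep p q (nval p q w) = w \<and> val p q w = of_nat (nval p q w)"
  unfolding L_def nval_def using rep_prop by auto

end



lemma lexord_snoc:
  "length y1 = length y2 \<Longrightarrow> (y1 @ [a], y2 @ [b]) \<in> lexord r \<Longrightarrow> y1 = y2 \<or> (y1, y2) \<in> lexord r"
proof (induction y1 arbitrary: y2)
  case Nil then show ?case by simp
next
  case (Cons c y1)
  then obtain d y2' where "y2 = d # y2'" by (cases y2) auto
  then show ?case using Cons by auto
qed

context
  fixes p q :: nat
  assumes q1: "q > 1" and pq: "p > q" and cop: "coprime p q"
begin

lemma q0': "q > 0" using q1 by simp
lemma p0': "p > 0" using pq by simp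

lemma ext_L_iff:
  assumes "u \<in> L p q" "u \<noteq> []"
  shows "u @ w \<in> L p q \<longleftrightarrow> set w \<subseteq> alph p \<and> (\<exists>i::int. val p q (u @ w) = of_int i)"
  using assms L_int_iff[OF q1 pq cop] by (auto simp: good_def)

lemma cong_dom:
  assumes u: "u \<in> L p q" "u \<noteq> []" and v: "v \<in> L p q" "v \<noteq> []"
    and n: "val p q u = of_int n" and m: "val p q v = of_int m"
    and d: "int q ^ k dvd (n - m)" and l: "length w \<le> k"
  shows "u @ w \<in> L p q \<longleftrightarrow> v @ w \<in> L p q"
proof -
  have "int q ^ length w dvd int q ^ k" using l by (simp add: le_imp_power_dvd)
  then have "int q ^ length w dvd (n - m)" using d dvd_trans by blast
  then obtain c where c: "n - m = int q ^ length w * c" by blast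
  have "val p q (u @ w) - val p q (v @ w) = (of_int n - of_int m) * (of_nat p / of_nat q) ^ length w"
    using n m by (simp add: val_append[OF q0'] algebra_simps)
  also have "\<dots> = of_int (c * int p ^ length w)"
    using q0' by (simp add: c[unfolded of_int_eq_iff[symmetric, where 'a=rat]] power_divide field_simps
        flip: of_int_diff)
  finally have e: "val p q (u @ w) = val p q (v @ w) + of_int (c * int p ^ length w)" by simp
  have "(\<exists>i::int. val p q (u @ w) = of_int i) \<longleftrightarrow> (\<exists>i::int. val p q (v @ w) = of_int i)"
    unfolding e by (metis add_diff_cancel_right' of_int_add of_int_diff)
  then show ?thesis using ext_L_iff[OF u] ext_L_iff[OF v] by simp
qed

lemma common_dvd:
  assumes u: "u \<in> L p q" "u \<noteq> []" and v: "v \<in> L p q" "v \<noteq> []"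
    and n: "val p q u = of_int n" and m: "val p q v = of_int m"
    and zu: "u @ z \<in> L p q" and zv: "v @ z \<in> L p q"
  shows "int q ^ length z dvd (n - m)"
proof -
  obtain i where i: "val p q (u @ z) = of_int i" using ext_L_iff[OF u] zu by blast
  obtain j where j: "val p q (v @ z) = of_int j" using ext_L_iff[OF v] zv by blast
  have "of_int (i - j) = (of_int n - of_int m) * (of_nat p / of_nat q :: rat) ^ length z"
    using i j n m by (simp add: val_append[OF q0'] algebra_simps flip: i j)
  then have "of_int ((i - j) * int q ^ length z) = (of_int ((n - m) * int p ^ length z) :: rat)"
    using q0' by (simp add: power_divide field_simps)
  then have "(i - j) * int q ^ length z = (n - m) * int p ^ length z" by (simp only: of_int_eq_iff)
  then have "int q ^ length z dvd (n - m) * int p ^ length z" by (metis dvd_triv_right)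
  moreover have "coprime (int q ^ length z) (int p ^ length z)" using cop by (simp add: coprime_commute)
  ultimately show ?thesis using coprime_dvd_mult_left_iff by blast
qed

lemma prefix_L:
  assumes "u @ y @ [a] \<in> L p q" "u \<noteq> []"
  shows "u @ y \<in> L p q"
proof -
  have g: "good p (u @ y @ [a])" and "\<exists>n::int. val p q ((u @ y) @ [a]) = of_int n"
    using assms(1) L_int_iff[OF q1 pq cop] by auto
  then obtain i where "val p q (u @ y) = of_int i" using val_int_prefix[OF q0' p0' cop] by blast
  moreover have "good p (u @ y)" using g assms(2) by (auto simp: good_def)
  ultimately show ?thesis using L_int_iff[OF q1 pq cop] by blast
qed

end


context
  fixes p q :: nat
  assumes q1: "q > 1" and pq: "p > q" and cop: "coprime p q"
begin
lemma q0'': "q > 0" using q1 by simp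
lemma child:
  assumes "w \<in> L p q" "w \<noteq> []"
  shows "\<exists>b. w @ [b] \<in> L p q"
proof -
  have "\<exists>n::int. val p q w = of_int n" using assms(1) L_int_iff[OF q1 pq cop, of w] by simp
  then obtain n where n: "val p q w = of_int n" by blast
  define b where "b = (- (int p * n)) mod int q"
  have b0: "b \<ge> 0" "b < int q" using q0'' unfolding b_def by auto
  have "(int p * n + b) mod int q = 0" unfolding b_def by (simp add: mod_add_right_eq)
  then have "int q dvd int p * n + b" by (simp add: mod_eq_0_iff_dvd)
  then obtain c where c: "int p * n + b = int q * c" by blast
  have "val p q (w @ [nat b]) = of_int c"
  proof -
    have nb: "(of_nat (nat b) :: rat) = of_int b" using b0 by simp
    have "(of_nat p * of_int n + of_int b :: rat) = of_int (int q * c)"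
      unfolding c[symmetric] by simp
    then have "(of_nat p * of_int n + of_nat (nat b) :: rat) = of_int (int q * c)" using nb by simp
    then show ?thesis using n q0'' by (simp add: val_snoc field_simps)
  qed
  moreover have "set [nat b] \<subseteq> alph p" using b0 pq by (auto simp: alph_def)
  ultimately have "w @ [nat b] \<in> L p q" using ext_L_iff[OF q1 pq cop assms, of "[nat b]"] by blast
  then show ?thesis by blast
qed

end



lemma F_inf_real:
  assumes "U \<in> F_inf p q x k"
  shows "\<exists>u. u \<in> L p q \<and> u \<noteq> [] \<and> factor p q x u k = U"
proof -
  have "infinite {w \<in> L p q. factor p q x w k = U}" using assms by (simp add: F_inf_def)
  then have "infinite ({w \<in> L p q. factor p q x w k = U} - {[]})" by simp
  then obtain u where "u \<in> {w \<in> L p q. factor p q x w k = U} - {[]}" by (metis ex_in_conv finite.emptyI)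
  then show ?thesis by blast
qed

lemma factor_dom:
  "factor p q x u k z \<noteq> None \<longleftrightarrow> u @ z \<in> L p q \<and> set z \<subseteq> alph p \<and> length z \<le> k"
  by (simp add: factor_def)

lemma factor_Some:
  "u @ z \<in> L p q \<Longrightarrow> set z \<subseteq> alph p \<Longrightarrow> length z \<le> k \<Longrightarrow> factor p q x u k z = Some (x (nval p q (u @ z)))"
  by (simp add: factor_def)

lemma lexord_nat_antisym:
  assumes "(a, b) \<in> lexord {(x::nat, y). x < y}" "(b, a) \<in> lexord {(x::nat, y). x < y}"
  shows False
proof -
  have "trans {(x::nat, y). x < y}" by (auto simp: trans_def)
  then have "(a, a) \<in> lexord {(x::nat, y). x < y}" using assms lexord_trans by blast
  then show False using lexord_irreflexive[of "{(x::nat, y). x < y}" a] by auto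
qed

theorem mainTheorem11:
  fixes p q h :: nat
    and x :: "nat \<Rightarrow> 'b" and B :: "'b set"
    and Q :: "'s set" and q0 :: 's and \<delta> :: "'s \<Rightarrow> nat \<Rightarrow> 's" and \<tau> :: "'s \<Rightarrow> 'b"
  assumes "p > q" and "q > 1" and "coprime p q"
    and "finite B" and "\<tau> ` Q \<subseteq> B"
    and "generated_by p q x Q q0 \<delta> \<tau>"
    and "\<forall>u\<in>L p q. \<forall>v\<in>L p q.
           (\<exists>k::int. val p q u - val p q v = of_int k * of_nat (q ^ h)) \<and>
           delta_star \<delta> q0 u \<noteq> delta_star \<delta> q0 v \<longrightarrow>
           (\<exists>w. u @ w \<in> L p q \<and> set w \<subseteq> alph p \<and> length w \<le> h \<and>
                \<tau> (delta_star \<delta> q0 (u @ w)) \<noteq> \<tau> (delta_star \<delta> q0 (v @ w)))"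
  shows "\<forall>j<q. \<forall>U\<in>F_inf p q x h. \<forall>U1\<in>F_inf_letter p q x (Suc h) (sigfirst p q j).
           \<forall>U2\<in>F_inf_letter p q x (Suc h) (sigfirst p q j).
             extends h U U1 \<and> extends h U U2 \<longrightarrow> U1 = U2"
proof (intro allI impI ballI)
  note q1 = assms(2) and pq = assms(1) and cop = assms(3)
  have xgen: "\<And>n. x n = \<tau> (delta_star \<delta> q0 (rep p q n))" using assms(6) by (simp add: generated_by_def)
  have xL: "\<And>w. w \<in> L p q \<Longrightarrow> x (nval p q w) = \<tau> (delta_star \<delta> q0 w)"
    using xgen L_rep[OF q1 pq cop] by metis
  have Lalph: "\<And>w. w \<in> L p q \<Longrightarrow> set w \<subseteq> alph p"
    using L_iff[OF q1 pq cop] by (simp add: good_def)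
  fix j U U1 U2
  assume U1: "U1 \<in> F_inf_letter p q x (Suc h) (sigfirst p q j)"
    and U2: "U2 \<in> F_inf_letter p q x (Suc h) (sigfirst p q j)"
    and ext: "extends h U U1 \<and> extends h U U2"
  define a where "a = sigfirst p q j"
  have U12: "\<And>z. length z \<le> h \<Longrightarrow> U1 z = U2 z"
  proof -
    fix z :: "nat list" assume "length z \<le> h"
    moreover have "(\<lambda>u. if length u \<le> h then U1 u else None) = (\<lambda>u. if length u \<le> h then U2 u else None)"
      using ext unfolding extends_def by (elim conjE) simp
    then have "(\<lambda>u. if length u \<le> h then U1 u else None) z = (\<lambda>u. if length u \<le> h then U2 u else None) z"
      by (rule fun_cong)
    ultimately show "U1 z = U2 z" by simp
  qed
  obtain u where u: "u \<in> L p q" "u \<noteq> []" "factor p q x u (Suc h) = U1"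
    using F_inf_real[of U1 p q x "Suc h"] U1 unfolding F_inf_letter_def by blast
  obtain v where v: "v \<in> L p q" "v \<noteq> []" "factor p q x v (Suc h) = U2"
    using F_inf_real[of U2 p q x "Suc h"] U2 unfolding F_inf_letter_def by blast
  obtain z1 where z1: "U1 z1 \<noteq> None" "length z1 = Suc h"
      "\<And>w. U1 w \<noteq> None \<Longrightarrow> length w = Suc h \<Longrightarrow> radix_le z1 w" "z1 \<noteq> []" "last z1 = a"
    using U1 unfolding F_inf_letter_def a_def by blast
  obtain z2 where z2: "U2 z2 \<noteq> None" "length z2 = Suc h"
      "\<And>w. U2 w \<noteq> None \<Longrightarrow> length w = Suc h \<Longrightarrow> radix_le z2 w" "z2 \<noteq> []" "last z2 = a"
    using U2 unfolding F_inf_letter_def a_def by blast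
  define y1 where "y1 = butlast z1"
  define y2 where "y2 = butlast z2"
  have z1e: "z1 = y1 @ [a]" using z1(4,5) unfolding y1_def by (metis append_butlast_last_id)
  have z2e: "z2 = y2 @ [a]" using z2(4,5) unfolding y2_def by (metis append_butlast_last_id)
  have ly: "length y1 = h" "length y2 = h" using z1e z2e z1(2) z2(2) by auto
  have uz1: "u @ y1 @ [a] \<in> L p q" "set z1 \<subseteq> alph p" using z1(1) u(3)[symmetric] z1e by (auto simp: factor_def split: if_splits)
  have vz2: "v @ y2 @ [a] \<in> L p q" "set z2 \<subseteq> alph p" using z2(1) v(3)[symmetric] z2e by (auto simp: factor_def split: if_splits)
  have uy1: "u @ y1 \<in> L p q" using prefix_L[OF q1 pq cop uz1(1) u(2)] .
  have vy2: "v @ y2 \<in> L p q" using prefix_L[OF q1 pq cop vz2(1) v(2)] .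
  have sy1: "set y1 \<subseteq> alph p" using uz1(2) z1e by auto
  have sy2: "set y2 \<subseteq> alph p" using vz2(2) z2e by auto
  have "U1 y1 \<noteq> None" using uy1 sy1 ly u(3)[symmetric] by (auto simp: factor_def split: if_splits)
  then have "U2 y1 \<noteq> None" using U12 ly by simp
  then have vy1: "v @ y1 \<in> L p q" using v(3)[symmetric] by (auto simp: factor_def split: if_splits)
  have "U2 y2 \<noteq> None" using vy2 sy2 ly v(3)[symmetric] by (auto simp: factor_def split: if_splits)
  then have "U1 y2 \<noteq> None" using U12 ly by simp
  then have uy2: "u @ y2 \<in> L p q" using u(3)[symmetric] by (auto simp: factor_def split: if_splits)
  obtain b1 where b1: "(v @ y1) @ [b1] \<in> L p q" using child[OF q1 pq cop vy1] v(2) by blast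
  obtain b2 where b2: "(u @ y2) @ [b2] \<in> L p q" using child[OF q1 pq cop uy2] u(2) by blast
  have "U2 (y1 @ [b1]) \<noteq> None" using b1 Lalph[OF b1] v(3)[symmetric] ly by (auto simp: factor_def split: if_splits)
  then have "radix_le z2 (y1 @ [b1])" using z2(3) ly by simp
  then have "(y2 @ [a], y1 @ [b1]) \<in> lexord {(x, y). x < y} \<or> y2 @ [a] = y1 @ [b1]"
    using z2e ly by (auto simp: radix_le_def)
  then have c1: "y2 = y1 \<or> (y2, y1) \<in> lexord {(x, y). x < y}" using lexord_snoc[of y2 y1] ly by auto
  have "U1 (y2 @ [b2]) \<noteq> None" using b2 Lalph[OF b2] u(3)[symmetric] ly by (auto simp: factor_def split: if_splits)
  then have "radix_le z1 (y2 @ [b2])" using z1(3) ly by simp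
  then have "(y1 @ [a], y2 @ [b2]) \<in> lexord {(x, y). x < y} \<or> y1 @ [a] = y2 @ [b2]"
    using z1e ly by (auto simp: radix_le_def)
  then have c2: "y1 = y2 \<or> (y1, y2) \<in> lexord {(x, y). x < y}" using lexord_snoc[of y1 y2] ly by auto
  have yy: "y1 = y2" using c1 c2 lexord_nat_antisym by blast
  have vz: "v @ y1 @ [a] \<in> L p q" using vz2(1) yy by simp
  obtain n where n: "val p q u = of_int n" using u(1) L_int_iff[OF q1 pq cop, of u] by blast
  obtain m where m: "val p q v = of_int m" using v(1) L_int_iff[OF q1 pq cop, of v] by blast
  have dvd: "int q ^ Suc h dvd (n - m)"
    using common_dvd[OF q1 pq cop u(1,2) v(1,2) n m uz1(1) vz] ly by simp
  have dom: "\<And>w. length w \<le> Suc h \<Longrightarrow> u @ w \<in> L p q \<longleftrightarrow> v @ w \<in> L p q"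
    using cong_dom[OF q1 pq cop u(1,2) v(1,2) n m dvd] by blast
  have st: "delta_star \<delta> q0 u = delta_star \<delta> q0 v"
  proof (rule ccontr)
    assume ne: "delta_star \<delta> q0 u \<noteq> delta_star \<delta> q0 v"
    have "int q ^ h dvd int q ^ Suc h" by (simp add: le_imp_power_dvd)
    then have "int q ^ h dvd (n - m)" using dvd dvd_trans by blast
    then obtain c where c: "n - m = int q ^ h * c" by blast
    have "val p q u - val p q v = of_int c * of_nat (q ^ h)"
      using n m by (simp add: c[unfolded of_int_eq_iff[symmetric, where 'a=rat]] flip: of_int_diff)
    then obtain w where w: "u @ w \<in> L p q" "set w \<subseteq> alph p" "length w \<le> h"
        "\<tau> (delta_star \<delta> q0 (u @ w)) \<noteq> \<tau> (delta_star \<delta> q0 (v @ w))"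
      using assms(7) u(1) v(1) ne by blast
    have vw: "v @ w \<in> L p q" using dom[of w] w by simp
    have "U1 w = Some (x (nval p q (u @ w)))" using u(3)[symmetric] w by (simp add: factor_Some)
    moreover have "U2 w = Some (x (nval p q (v @ w)))" using v(3)[symmetric] w vw by (simp add: factor_Some)
    moreover have "U1 w = U2 w" using U12 w(3) by simp
    ultimately have "x (nval p q (u @ w)) = x (nval p q (v @ w))" by simp
    then show False using xL[OF w(1)] xL[OF vw] w(4) by simp
  qed
  show "U1 = U2"
  proof
    fix w
    show "U1 w = U2 w"
    proof (cases "set w \<subseteq> alph p \<and> length w \<le> Suc h \<and> u @ w \<in> L p q")
      case True
      then have vw: "v @ w \<in> L p q" using dom by blast
      have "delta_star \<delta> q0 (u @ w) = delta_star \<delta> q0 (v @ w)"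
        using st by (simp add: delta_star_def)
      then show ?thesis using True vw u(3)[symmetric] v(3)[symmetric] xL[of "u @ w"] xL[of "v @ w"] by (simp add: factor_Some)
    next
      case False
      then have "U1 w = None" using u(3)[symmetric] by (auto simp: factor_def)
      moreover have "U2 w = None" using v(3)[symmetric] False dom by (auto simp: factor_def)
      ultimately show ?thesis by simp
    qed
  qed
qed


end
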